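(* Let $\beta\in\mathbb{R}$ and let $f\not\equiv 0$ be analytic in the half-plane $\{z:\Re z>\beta\}$, and suppose that for every $a>0$ one has $f(t)=O(e^{-at})$ as $t\to+\infty$, $t\in\mathbb{R}^+$. Then for every sufficiently small $\epsilon\ge 0$ and every $b>0$, the function $f(z)e^{-bz^{1-\epsilon}}$ (principal branch) is unbounded in the closed right half-plane (intersected with the domain $\{\Re z>\beta\}$ of $f$). *)

theory Defs
  imports "HOL-Complex_Analysis.Complex_Analysis" "HOL-Library.Landau_Symbols"
begin

end

theory Submission
  imports Defs
begin

lemma re_P_lower:
  fixes w :: complex
  assumes "\<bar>Im w\<bar> \<le> Re w"
  shows "Re ((w+1) * Ln (w+1)) \<ge> (Re w + 1) * (ln (norm (w+1)) - pi)"
proof -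
  have nz: "w + 1 \<noteq> 0" using assms by (auto simp: complex_eq_iff)
  have "Re ((w+1) * Ln (w+1)) = (Re w + 1) * ln (norm (w+1)) - Im w * Arg (w+1)"
    using nz by (simp add: Re_Ln Arg_eq_Im_Ln)
  moreover have "Im w * Arg (w+1) \<le> (Re w + 1) * pi"
  proof -
    have "\<bar>Arg (w+1)\<bar> \<le> pi" using mpi_less_Arg[of "w+1"] Arg_le_pi[of "w+1"] by auto
    then have "\<bar>Im w * Arg (w+1)\<bar> \<le> Re w * pi"
      using assms by (simp add: abs_mult mult_mono)
    moreover have "Re w * pi \<le> (Re w + 1) * pi" by (simp add: distrib_right)
    ultimately show ?thesis by (smt (verit) abs_ge_self)
  qed
  ultimately show ?thesis by (simp add: algebra_simps)
qed

lemma re_P_C0: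
  fixes w :: complex
  assumes "\<bar>Im w\<bar> \<le> Re w"
  shows "Re ((w+1) * Ln (w+1)) \<ge> - (pi * exp pi)"
proof -
  have n1: "norm (w+1) \<ge> Re w + 1" using complex_Re_le_cmod[of "w+1"] by simp
  have s0: "Re w \<ge> 0" using assms by linarith
  have "(Re w + 1) * (ln (norm (w+1)) - pi) \<ge> - (pi * exp pi)"
  proof (cases "ln (norm (w+1)) \<ge> pi")
    case True then show ?thesis using s0 by (smt (verit) mult_nonneg_nonneg pi_gt_zero exp_gt_zero mult_pos_pos)
  next
    case False
    have np: "norm (w+1) > 0" using n1 s0 by linarith
    have "norm (w+1) < exp pi" using False np by (metis exp_ln ln_less_cancel_iff exp_gt_zero not_le ln_exp)
    then have a: "Re w + 1 \<le> exp pi" using n1 by linarith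
    have b: "ln (norm (w+1)) \<ge> 0" using n1 s0 by simp
    have "(Re w + 1) * (ln (norm (w+1)) - pi) \<ge> (Re w + 1) * (- pi)"
      using b s0 by (intro mult_left_mono) auto
    also have "(Re w + 1) * (- pi) \<ge> exp pi * (-pi)" using a by (intro mult_right_mono_neg) auto
    finally show ?thesis by (simp add: mult.commute)
  qed
  then show ?thesis using re_P_lower[OF assms] by linarith
qed

lemma frontier_sector_ball:
  fixes R :: real
  assumes "z \<in> frontier ({w. \<bar>Im w\<bar> \<le> Re w} \<inter> cball 0 R)"
  shows "z \<in> {w. \<bar>Im w\<bar> \<le> Re w} \<inter> cball 0 R \<and> (\<bar>Im z\<bar> = Re z \<or> norm z = R)"
proof -
  let ?S = "{w. \<bar>Im w\<bar> \<le> Re w} \<inter> cball 0 R"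
  have cl: "closed ?S"
    by (intro closed_Int closed_cball) (auto intro!: closed_Collect_le continuous_intros)
  have zS: "z \<in> ?S" using assms cl frontier_subset_closed by blast
  have "\<not> (\<bar>Im z\<bar> < Re z \<and> norm z < R)"
  proof
    assume a: "\<bar>Im z\<bar> < Re z \<and> norm z < R"
    let ?U = "{w. \<bar>Im w\<bar> < Re w} \<inter> ball 0 R"
    have "open ?U" by (intro open_Int open_ball) (auto intro!: open_Collect_less continuous_intros)
    moreover have "?U \<subseteq> ?S" by auto
    ultimately have "?U \<subseteq> interior ?S" by (simp add: interior_maximal)
    moreover have "z \<in> ?U" using a by auto
    ultimately have "z \<in> interior ?S" by blast
    then show False using assms by (simp add: frontier_def)
  qed
  then show ?thesis using zS by auto
qed

lemma PL_sector:
  fixes G :: "complex \<Rightarrow> complex"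
  assumes hol: "G holomorphic_on {w. \<bar>Im w\<bar> \<le> Re w}"
    and grow: "\<And>w. \<bar>Im w\<bar> \<le> Re w \<Longrightarrow> norm (G w) \<le> K * exp (A * norm w)"
    and bd1: "\<And>s. s \<ge> 0 \<Longrightarrow> norm (G (Complex s s)) \<le> B"
    and bd2: "\<And>s. s \<ge> 0 \<Longrightarrow> norm (G (Complex s (-s))) \<le> B"
    and Bpos: "B > 0" and Kpos: "K > 0" and Apos: "A \<ge> 0"
    and w0: "\<bar>Im w0\<bar> \<le> Re w0"
  shows "norm (G w0) \<le> B"
proof -
  define D where "D = {w::complex. \<bar>Im w\<bar> \<le> Re w}"
  define P where "P = (\<lambda>w::complex. (w+1) * Ln (w+1))"
  define C0 where "C0 = pi * exp pi"
  have PC0: "Re (P w) \<ge> - C0" if "w \<in> D" for w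
    using re_P_C0 that by (simp add: P_def C0_def D_def)
  have Pl: "Re (P w) \<ge> (Re w + 1) * (ln (norm (w+1)) - pi)" if "w \<in> D" for w
    using re_P_lower that by (simp add: P_def D_def)
  have holP: "P holomorphic_on D"
    unfolding P_def
  proof (intro holomorphic_intros)
    fix z assume "z \<in> D"
    then have "Re (z + 1) > 0" by (simp add: D_def)
    then show "z + 1 \<notin> \<real>\<^sub>\<le>\<^sub>0" by (auto simp: complex_nonpos_Reals_iff)
  qed
  have main: "norm (G w0) \<le> B * exp (\<delta> * (C0 + Re (P w0)))" if dpos: "\<delta> > 0" for \<delta>
  proof -
    define \<Phi> where "\<Phi> = (\<lambda>w. G w * exp (- (of_real \<delta>) * P w))"
    have normexp: "norm (exp (- (of_real \<delta>) * P w)) = exp (- \<delta> * Re (P w))" for w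
      by simp
    define L where "L = \<bar>ln (B / K)\<bar>"
    define R where "R = max (norm w0 + 1) (exp ((2*A + \<delta>*pi + L) / \<delta>))"
    define S where "S = D \<inter> cball 0 R"
    have holPhi: "\<Phi> holomorphic_on D" unfolding \<Phi>_def
      by (intro holomorphic_intros hol[folded D_def] holP)
    have "norm (\<Phi> w0) \<le> B * exp (\<delta> * C0)"
    proof (rule maximum_modulus_frontier[of \<Phi> S])
      show "\<Phi> holomorphic_on interior S"
        by (rule holomorphic_on_subset[OF holPhi]) (auto simp: S_def dest: interior_subset[THEN subsetD])
      have cl: "closed S" unfolding S_def D_def
        by (intro closed_Int closed_cball) (auto intro!: closed_Collect_le continuous_intros)
      show "continuous_on (closure S) \<Phi>"
        using continuous_on_subset[OF holomorphic_on_imp_continuous_on[OF holPhi], of "closure S"] cl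
        by (auto simp: S_def closure_closed)
      show "bounded S" by (simp add: S_def bounded_Int)
      show "w0 \<in> S" using w0 by (auto simp: S_def D_def R_def)
    next
      fix z assume "z \<in> frontier S"
      then have zS: "z \<in> D" "norm z \<le> R" and zb: "\<bar>Im z\<bar> = Re z \<or> norm z = R"
        using frontier_sector_ball[of z R] by (auto simp: S_def D_def)
      have eC: "norm (exp (- (of_real \<delta>) * P z)) \<le> exp (\<delta> * C0)"
        unfolding normexp using mult_left_mono[OF PC0[OF zS(1)], of \<delta>] dpos by simp
      show "norm (\<Phi> z) \<le> B * exp (\<delta> * C0)"
      proof (cases "\<bar>Im z\<bar> = Re z")
        case True
        have "norm (G z) \<le> B"
        proof (cases "Im z \<ge> 0")
          case True
          then have "z = Complex (Re z) (Re z)" using \<open>\<bar>Im z\<bar> = Re z\<close> by (simp add: complex_eq_iff)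
          then show ?thesis using bd1[of "Re z"] zS(1) by (simp add: D_def)
        next
          case False
          then have "z = Complex (Re z) (- Re z)" using \<open>\<bar>Im z\<bar> = Re z\<close> by (simp add: complex_eq_iff)
          then show ?thesis using bd2[of "Re z"] zS(1) by (simp add: D_def)
        qed
        then show ?thesis unfolding \<Phi>_def norm_mult
          using eC Bpos by (intro mult_mono) auto
      next
        case False
        then have nzR: "norm z = R" using zb by auto
        define s where "s = Re z"
        have s0: "s \<ge> 0" using zS(1) by (simp add: D_def s_def)
        have nz2: "norm z \<le> 2 * (s + 1)"
          using cmod_le[of z] zS(1) by (simp add: D_def s_def)
        have n1: "norm (w+1) \<ge> norm w" if "Re w \<ge> 0" for w :: complex
        proof -
          have e1: "(norm (w+1))^2 = (Re w + 1)^2 + (Im w)^2" by (simp add: cmod_power2)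
          have e2: "(norm w)^2 = (Re w)^2 + (Im w)^2" by (simp add: cmod_power2)
          have "(Re w + 1)^2 \<ge> (Re w)^2" using that by (simp add: power_mono)
          then have "(norm (w+1))^2 \<ge> (norm w)^2" using e1 e2 by linarith
          then show ?thesis by (simp add: power2_le_iff_abs_le)
        qed
        have Rpos: "R > 0" unfolding R_def by (simp add: less_max_iff_disj)
        have lnR: "ln R \<ge> (2*A + \<delta>*pi + L) / \<delta>"
          using Rpos by (simp add: R_def ln_ge_iff)
        have lnz: "ln (norm (z+1)) \<ge> ln R"
        proof -
          have "R \<le> norm (z+1)" using n1[of z] s0 nzR by (simp add: s_def)
          then show ?thesis using Rpos by (subst ln_le_cancel_iff) auto
        qed
        define E where "E = 2*A + \<delta>*pi - \<delta> * ln (norm (z+1))"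
        have EL: "E \<le> - L"
        proof -
          have "\<delta> * ln R \<ge> 2*A + \<delta>*pi + L" using lnR dpos by (simp add: field_simps)
          moreover have "\<delta> * ln (norm (z+1)) \<ge> \<delta> * ln R" using lnz dpos by simp
          ultimately show ?thesis by (simp add: E_def)
        qed
        have L0: "L \<ge> 0" by (simp add: L_def)
        have "A * norm z - \<delta> * Re (P z) \<le> (s+1) * E"
        proof -
          have "A * norm z \<le> A * (2 * (s+1))" using nz2 Apos by (simp add: mult_left_mono)
          moreover have "\<delta> * Re (P z) \<ge> \<delta> * ((s + 1) * (ln (norm (z+1)) - pi))"
            using Pl[OF zS(1)] dpos by (simp add: s_def mult_left_mono)
          ultimately show ?thesis by (simp add: E_def algebra_simps)
        qed
        also have "(s+1) * E \<le> E"
        proof -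
          have "s * E \<le> 0" using EL L0 s0 by (intro mult_nonneg_nonpos) auto
          then show ?thesis by (simp add: distrib_right)
        qed
        also have "E \<le> ln (B / K)" using EL by (simp add: L_def)
        finally have ex: "A * norm z - \<delta> * Re (P z) \<le> ln (B / K)" .
        have "norm (\<Phi> z) \<le> K * exp (A * norm z) * exp (- \<delta> * Re (P z))"
          unfolding \<Phi>_def norm_mult normexp using grow[of z] zS(1)
          by (intro mult_right_mono) (auto simp: D_def)
        also have "\<dots> = K * exp (A * norm z - \<delta> * Re (P z))"
          by (simp only: mult.assoc exp_add[symmetric] diff_conv_add_uminus mult_minus_left)
        also have "\<dots> \<le> K * exp (ln (B / K))" using ex Kpos by simp
        also have "\<dots> = B" using Bpos Kpos by simp
        also have "B \<le> B * exp (\<delta> * C0)"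
        proof -
          have "\<delta> * C0 \<ge> 0" using dpos by (simp add: C0_def)
          then have "exp (\<delta> * C0) \<ge> 1" by simp
          then show ?thesis using Bpos by simp
        qed
        finally show ?thesis .
      qed
    qed
    then have "norm (G w0) * exp (- \<delta> * Re (P w0)) \<le> B * exp (\<delta> * C0)"
      by (simp add: \<Phi>_def norm_mult)
    then have "norm (G w0) \<le> B * exp (\<delta> * C0) / exp (- \<delta> * Re (P w0))"
      by (simp add: field_simps)
    also have "\<dots> = B * exp (\<delta> * (C0 + Re (P w0)))"
      by (simp add: exp_minus exp_add field_simps distrib_left)
    finally show ?thesis .
  qed
  show ?thesis
  proof (rule ccontr)
    assume "\<not> norm (G w0) \<le> B"
    then have gt: "norm (G w0) > B" by simp
    define X where "X = C0 + Re (P w0)"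
    have X0: "X \<ge> 0" using PC0[of w0] w0 by (simp add: X_def D_def)
    define \<delta> where "\<delta> = ln (norm (G w0) / B) / (X + 1)"
    have "norm (G w0) / B > 1" using gt Bpos by simp
    then have lpos: "ln (norm (G w0) / B) > 0" by simp
    have dpos: "\<delta> > 0" using lpos X0 by (simp add: \<delta>_def)
    have "\<delta> * X < ln (norm (G w0) / B)"
    proof -
      have "\<delta> * X < \<delta> * (X + 1)" using dpos by simp
      also have "\<delta> * (X + 1) = ln (norm (G w0) / B)" using X0 by (simp add: \<delta>_def)
      finally show ?thesis .
    qed
    then have "B * exp (\<delta> * X) < B * exp (ln (norm (G w0) / B))" using Bpos by simp
    also have "\<dots> = norm (G w0)"
    proof -
      have "norm (G w0) / B > 0" using gt Bpos by (intro divide_pos_pos) linarith+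
      then have "exp (ln (norm (G w0) / B)) = norm (G w0) / B" by simp
      then show ?thesis using Bpos by simp
    qed
    finally show False using main[OF dpos] by (simp add: X_def)
  qed
qed


lemma frontier_half_ball:
  fixes R :: real
  assumes "z \<in> frontier ({w. 0 \<le> Re w} \<inter> cball 0 R)"
  shows "z \<in> {w. 0 \<le> Re w} \<inter> cball 0 R \<and> (Re z = 0 \<or> norm z = R)"
proof -
  let ?S = "{w. 0 \<le> Re w} \<inter> cball 0 R"
  have cl: "closed ?S"
    by (intro closed_Int closed_cball) (auto intro!: closed_Collect_le continuous_intros)
  have zS: "z \<in> ?S" using assms cl frontier_subset_closed by blast
  have "\<not> (0 < Re z \<and> norm z < R)"
  proof
    assume a: "0 < Re z \<and> norm z < R"
    let ?U = "{w. 0 < Re w} \<inter> ball 0 R"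
    have "open ?U" by (intro open_Int open_ball) (auto intro!: open_Collect_less continuous_intros)
    moreover have "?U \<subseteq> ?S" by auto
    ultimately have "?U \<subseteq> interior ?S" by (simp add: interior_maximal)
    moreover have "z \<in> ?U" using a by auto
    ultimately have "z \<in> interior ?S" by blast
    then show False using assms by (simp add: frontier_def)
  qed
  then show ?thesis using zS by auto
qed

lemma norm_one_plus_ge:
  fixes z :: complex and d :: real
  assumes "Re z \<ge> 0" "d \<ge> 0"
  shows "norm (1 + of_real d * z) \<ge> d * norm z" "norm (1 + of_real d * z) \<ge> 1"
proof -
  have e1: "(norm (1 + of_real d * z))^2 = (1 + d * Re z)^2 + (d * Im z)^2" by (simp add: cmod_power2)
  have e2: "(d * norm z)^2 = (d * Re z)^2 + (d * Im z)^2" by (simp add: cmod_power2 power_mult_distrib algebra_simps)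
  have p: "d * Re z \<ge> 0" using assms by simp
  have "(1 + d * Re z)^2 \<ge> (d * Re z)^2" using p by (simp add: power_mono)
  then have "(norm (1 + of_real d * z))^2 \<ge> (d * norm z)^2" using e1 e2 by linarith
  then show "norm (1 + of_real d * z) \<ge> d * norm z" by (simp add: power2_le_iff_abs_le)
  have "(1 + d * Re z)^2 \<ge> 1^2" using p by (simp add: power_mono)
  then have "(norm (1 + of_real d * z))^2 \<ge> 1^2" using e1 by (smt (verit) zero_le_power2)
  then show "norm (1 + of_real d * z) \<ge> 1" by (metis abs_one norm_ge_zero power2_le_iff_abs_le)
qed

lemma PL_halfplane:
  fixes F :: "complex \<Rightarrow> complex"
  assumes hol: "F holomorphic_on {z. 0 \<le> Re z}"
    and bd: "\<And>z. 0 \<le> Re z \<Longrightarrow> norm (F z) \<le> B"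
    and bdi: "\<And>y. norm (F (Complex 0 y)) \<le> M"
    and Mpos: "M > 0"
    and z0: "0 \<le> Re z0"
  shows "norm (F z0) \<le> M"
proof -
  have B0: "B \<ge> 0" using bd[of 0] by (metis norm_ge_zero order.trans zero_complex.sel(1) order_refl)
  have main: "norm (F z0) \<le> M * (1 + \<delta> * norm z0)" if dpos: "\<delta> > 0" for \<delta>
  proof -
    define \<Phi> where "\<Phi> = (\<lambda>z. F z / (1 + of_real \<delta> * z))"
    define R where "R = max (norm z0 + 1) (B / (\<delta> * M) + 1)"
    define S where "S = {w. 0 \<le> Re w} \<inter> cball 0 R"
    have nz: "1 + of_real \<delta> * z \<noteq> 0" if "0 \<le> Re z" for z
      using norm_one_plus_ge(2)[OF that, of \<delta>] dpos by auto
    have holPhi: "\<Phi> holomorphic_on {z. 0 \<le> Re z}" unfolding \<Phi>_def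
      using nz by (intro holomorphic_intros hol) auto
    have "norm (\<Phi> z0) \<le> M"
    proof (rule maximum_modulus_frontier[of \<Phi> S])
      show "\<Phi> holomorphic_on interior S"
        by (rule holomorphic_on_subset[OF holPhi]) (auto simp: S_def dest: interior_subset[THEN subsetD])
      have cl: "closed S" unfolding S_def
        by (intro closed_Int closed_cball) (auto intro!: closed_Collect_le continuous_intros)
      show "continuous_on (closure S) \<Phi>"
        using continuous_on_subset[OF holomorphic_on_imp_continuous_on[OF holPhi], of "closure S"] cl
        by (auto simp: S_def closure_closed)
      show "bounded S" by (simp add: S_def bounded_Int)
      show "z0 \<in> S" using z0 by (auto simp: S_def R_def)
    next
      fix z assume "z \<in> frontier S"
      then have zS: "0 \<le> Re z" "norm z \<le> R" and zb: "Re z = 0 \<or> norm z = R"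
        using frontier_half_ball[of z R] by (auto simp: S_def)
      have n1: "norm (1 + of_real \<delta> * z) \<ge> 1" using norm_one_plus_ge(2)[OF zS(1), of \<delta>] dpos by simp
      show "norm (\<Phi> z) \<le> M"
      proof (cases "Re z = 0")
        case True
        then have "z = Complex 0 (Im z)" by (simp add: complex_eq_iff)
        then have "norm (F z) \<le> M" using bdi[of "Im z"] by simp
        moreover have "norm (\<Phi> z) \<le> norm (F z)"
          unfolding \<Phi>_def norm_divide using n1 by (simp add: divide_le_eq mult_le_cancel_left1 order_trans [OF _ n1])
        ultimately show ?thesis by linarith
      next
        case False
        then have nzR: "norm z = R" using zb by auto
        have n2: "norm (1 + of_real \<delta> * z) \<ge> \<delta> * R" using norm_one_plus_ge(1)[OF zS(1), of \<delta>] dpos nzR by simp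
        have R1: "R \<ge> B / (\<delta> * M) + 1" by (simp add: R_def)
        have "\<delta> * R * M \<ge> \<delta> * (B / (\<delta> * M) + 1) * M"
          using R1 dpos Mpos by (intro mult_right_mono mult_left_mono) auto
        also have "\<delta> * (B / (\<delta> * M) + 1) * M = B + \<delta> * M" using dpos Mpos by (simp add: field_simps)
        finally have "\<delta> * R * M \<ge> B" using dpos Mpos by (smt (verit) mult_pos_pos)
        then have "B \<le> M * norm (1 + of_real \<delta> * z)"
          using n2 Mpos by (smt (verit) mult.commute mult_left_mono)
        then have "norm (F z) \<le> M * norm (1 + of_real \<delta> * z)" using bd[OF zS(1)] by linarith
        then show ?thesis unfolding \<Phi>_def norm_divide using n1 Mpos by (simp add: divide_le_eq)
      qed
    qed
    then have "norm (F z0) \<le> M * norm (1 + of_real \<delta> * z0)"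
      unfolding \<Phi>_def norm_divide using norm_one_plus_ge(2)[OF z0, of \<delta>] dpos
      by (simp add: divide_le_eq split: if_splits)
    also have "norm (1 + of_real \<delta> * z0) \<le> 1 + \<delta> * norm z0"
      using norm_triangle_ineq[of 1 "of_real \<delta> * z0"] dpos by (simp add: norm_mult)
    then have "M * norm (1 + of_real \<delta> * z0) \<le> M * (1 + \<delta> * norm z0)" using Mpos by simp
    finally show ?thesis .
  qed
  show ?thesis
  proof (rule ccontr)
    assume "\<not> norm (F z0) \<le> M"
    then have gt: "norm (F z0) > M" by simp
    define \<delta> where "\<delta> = (norm (F z0) - M) / (2 * M * (norm z0 + 1))"
    have dpos: "\<delta> > 0" unfolding \<delta>_def using gt Mpos
      by (intro divide_pos_pos mult_pos_pos) (auto simp: add_nonneg_pos)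
    have "M * (\<delta> * norm z0) \<le> M * (\<delta> * (norm z0 + 1))" using dpos Mpos by simp
    also have "M * (\<delta> * (norm z0 + 1)) = (norm (F z0) - M) / 2"
    proof -
      have n0: "norm z0 + 1 \<noteq> 0" by (smt (verit) norm_ge_zero)
      have "\<delta> * (norm z0 + 1) = (norm (F z0) - M) / (2 * M)"
        using n0 by (simp add: \<delta>_def)
      then show ?thesis using Mpos by simp
    qed
    finally have "M * (1 + \<delta> * norm z0) < norm (F z0)" using gt by (simp add: distrib_left)
    then show False using main[OF dpos] by linarith
  qed
qed


lemma core_vanish:
  fixes h :: "complex \<Rightarrow> complex"
  assumes hol: "h holomorphic_on {z. 0 \<le> Re z}"
    and bd: "\<And>z. 0 \<le> Re z \<Longrightarrow> norm (h z) \<le> M"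
    and dec: "\<And>a. a > 0 \<Longrightarrow> \<exists>C T. \<forall>t\<ge>T. norm (h (of_real t)) \<le> C * exp (- a * t)"
    and z0: "0 < Re z0"
  shows "h z0 = 0"
proof -
  define M' where "M' = max M 1"
  have M'pos: "M' > 0" by (simp add: M'_def)
  have bd': "norm (h z) \<le> M'" if "0 \<le> Re z" for z using bd[OF that] by (simp add: M'_def)
  have key: "norm (h z0) * exp (a * Re z0) \<le> M'" if apos: "a > 0" for a
  proof -
    define F where "F = (\<lambda>z. h z * exp (of_real a * z))"
    obtain C T where CT: "\<And>t. t \<ge> T \<Longrightarrow> norm (h (of_real t)) \<le> C * exp (- a * t)"
      using dec[OF apos] by blast
    define T' where "T' = max T 0"
    define Bq where "Bq = max (max C (M' * exp (a * T'))) M'"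
    have Bqpos: "Bq > 0" using M'pos by (simp add: Bq_def less_max_iff_disj)
    have holF: "F holomorphic_on {z. 0 \<le> Re z}" unfolding F_def by (intro holomorphic_intros hol)
    have normF: "norm (F z) = norm (h z) * exp (a * Re z)" for z by (simp add: F_def norm_mult)
    have real_bd: "norm (F (of_real t)) \<le> Bq" if "t \<ge> 0" for t
    proof (cases "t \<ge> T")
      case True
      have "norm (F (of_real t)) \<le> C * exp (- a * t) * exp (a * t)"
        unfolding normF Re_complex_of_real using CT[OF True] by (intro mult_right_mono) auto
      also have "\<dots> = C" by (simp add: mult.assoc exp_add[symmetric])
      finally show ?thesis by (simp add: Bq_def)
    next
      case False
      have "exp (a * t) \<le> exp (a * T')" using False apos by (simp add: T'_def)
      then have "norm (F (of_real t)) \<le> M' * exp (a * T')"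
        unfolding normF using bd'[of "of_real t"] that M'pos by (intro mult_mono) auto
      then show ?thesis by (simp add: Bq_def)
    qed
    have im_bd: "norm (F (Complex 0 y)) \<le> M'" for y
      unfolding normF using bd'[of "Complex 0 y"] by simp
    have grow: "norm (F z) \<le> M' * exp (a * norm z)" if "0 \<le> Re z" for z
      unfolding normF using bd'[OF that] apos complex_Re_le_cmod[of z] M'pos
      by (intro mult_mono) auto
    have quad: "norm (F (c * w)) \<le> Bq" if c: "c = 1 + \<i> \<or> c = 1 - \<i>" and w: "\<bar>Im w\<bar> \<le> Re w" for c w
    proof (rule PL_sector[where K = M' and A = "2 * a", OF _ _ _ _ Bqpos M'pos _ w])
      have sub: "(\<lambda>w. c * w) ` {w. \<bar>Im w\<bar> \<le> Re w} \<subseteq> {z. 0 \<le> Re z}"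
        using c by (auto simp: abs_le_iff)
      show "(\<lambda>w. F (c * w)) holomorphic_on {w. \<bar>Im w\<bar> \<le> Re w}"
        using holomorphic_on_compose_gen[OF _ holF sub] by (auto simp: o_def intro: holomorphic_intros)
      show "norm (F (c * w)) \<le> M' * exp (2 * a * norm w)" if "\<bar>Im w\<bar> \<le> Re w" for w
      proof -
        have r: "0 \<le> Re (c * w)" using c that by (auto simp: abs_le_iff)
        have s2: "sqrt 2 \<le> (2::real)" by (rule real_le_lsqrt) auto
        have nc: "norm c \<le> 2" using c s2 by (auto simp: cmod_def)
        have "norm (c * w) \<le> 2 * norm w" using nc by (simp add: norm_mult mult_right_mono)
        then have "exp (a * norm (c * w)) \<le> exp (2 * a * norm w)" using apos by simp
        then show ?thesis using grow[OF r] M'pos by (smt (verit) mult_left_mono)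
      qed
      show "norm (F (c * Complex s s)) \<le> Bq" if "s \<ge> 0" for s
        using c
      proof
        assume "c = 1 + \<i>"
        then have "c * Complex s s = Complex 0 (2 * s)" by (simp add: complex_eq_iff)
        then show ?thesis using im_bd[of "2 * s"] by (simp add: Bq_def)
      next
        assume "c = 1 - \<i>"
        then have "c * Complex s s = of_real (2 * s)" by (simp add: complex_eq_iff)
        then show ?thesis using real_bd[of "2 * s"] that by simp
      qed
      show "norm (F (c * Complex s (-s))) \<le> Bq" if "s \<ge> 0" for s
        using c
      proof
        assume "c = 1 + \<i>"
        then have "c * Complex s (-s) = of_real (2 * s)" by (simp add: complex_eq_iff)
        then show ?thesis using real_bd[of "2 * s"] that by simp
      next
        assume "c = 1 - \<i>"
        then have "c * Complex s (-s) = Complex 0 (- 2 * s)" by (simp add: complex_eq_iff)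
        then show ?thesis using im_bd[of "- 2 * s"] by (simp add: Bq_def)
      qed
    qed (use apos in auto)
    have allbd: "norm (F z) \<le> Bq" if "0 \<le> Re z" for z
    proof (cases "Im z \<ge> 0")
      case True
      define w where "w = z / (1 + \<i>)"
      have "z = (1 + \<i>) * w" by (simp add: w_def complex_eq_iff)
      moreover have "\<bar>Im w\<bar> \<le> Re w" using True that
        by (simp add: w_def complex_eq_iff Re_divide Im_divide abs_le_iff field_simps)
      ultimately show ?thesis using quad[of "1 + \<i>" w] by simp
    next
      case False
      define w where "w = z / (1 - \<i>)"
      have "z = (1 - \<i>) * w" by (simp add: w_def complex_eq_iff)
      moreover have "\<bar>Im w\<bar> \<le> Re w" using False that
        by (simp add: w_def complex_eq_iff Re_divide Im_divide abs_le_iff field_simps)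
      ultimately show ?thesis using quad[of "1 - \<i>" w] by simp
    qed
    have "norm (F z0) \<le> M'"
      by (rule PL_halfplane[OF holF allbd im_bd M'pos]) (use z0 in auto)
    then show ?thesis by (simp add: normF)
  qed
  show ?thesis
  proof (rule ccontr)
    assume hz: "h z0 \<noteq> 0"
    define x0 where "x0 = Re z0"
    have x0: "x0 > 0" using z0 by (simp add: x0_def)
    define a where "a = max 1 ((ln M' - ln (norm (h z0))) / x0 + 1)"
    have apos: "a > 0" by (simp add: a_def less_max_iff_disj)
    have "a > (ln M' - ln (norm (h z0))) / x0" by (simp add: a_def less_max_iff_disj)
    then have "a * x0 > ln M' - ln (norm (h z0))" using x0 by (simp add: field_simps)
    then have "ln (norm (h z0)) + a * x0 > ln M'" by linarith
    then have "exp (ln (norm (h z0)) + a * x0) > exp (ln M')" by simp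
    then have "norm (h z0) * exp (a * x0) > M'" using hz M'pos by (simp add: exp_add)
    then show False using key[OF apos] by (simp add: x0_def)
  qed
qed


theorem lemma2:
  fixes f :: "complex \<Rightarrow> complex" and \<beta> :: real
  assumes "f analytic_on {z. Re z > \<beta>}"
    and "\<exists>z. Re z > \<beta> \<and> f z \<noteq> 0"
    and "\<And>a. a > 0 \<Longrightarrow>
           (\<lambda>t::real. f (complex_of_real t)) \<in> O[at_top](\<lambda>t. complex_of_real (exp (- a * t)))"
  shows "\<exists>\<epsilon>0>0. \<forall>\<epsilon>. 0 \<le> \<epsilon> \<and> \<epsilon> < \<epsilon>0 \<longrightarrow> (\<forall>b>0.
           \<not> bounded ((\<lambda>z. f z * exp (- complex_of_real b * z powr complex_of_real (1 - \<epsilon>)))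
                        ` {z. Re z \<ge> 0 \<and> Re z > \<beta>}))"
proof (intro exI[of _ 1] conjI allI impI notI zero_less_one)
  fix \<epsilon> b :: real
  assume "0 \<le> \<epsilon> \<and> \<epsilon> < 1" and bpos: "b > 0"
  assume "bounded ((\<lambda>z. f z * exp (- complex_of_real b * z powr complex_of_real (1 - \<epsilon>)))
                        ` {z. Re z \<ge> 0 \<and> Re z > \<beta>})"
  then obtain M where M: "\<And>z. Re z \<ge> 0 \<Longrightarrow> Re z > \<beta> \<Longrightarrow>
      norm (f z * exp (- complex_of_real b * z powr complex_of_real (1 - \<epsilon>))) \<le> M"
    unfolding bounded_iff by blast
  define c where "c = max \<beta> 0 + 1"
  have cpos: "c > 0" and cb: "c > \<beta>" using max.cobounded1[of \<beta> 0] max.cobounded2[of 0 \<beta>]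
    unfolding c_def by linarith+
  define h where "h = (\<lambda>z. f (z + of_real c) *
      exp (- complex_of_real b * (z + of_real c) powr complex_of_real (1 - \<epsilon>)))"
  have holf: "f holomorphic_on {z. Re z > \<beta>}" using assms(1) by (rule analytic_imp_holomorphic)
  have hol: "h holomorphic_on {z. 0 \<le> Re z}"
  proof -
    have sub: "(\<lambda>z. z + of_real c) ` {z. 0 \<le> Re z} \<subseteq> {z. Re z > \<beta>}"
      by (auto simp: c_def)
    have h1: "(\<lambda>z. f (z + of_real c)) holomorphic_on {z. 0 \<le> Re z}"
    proof -
      have "(\<lambda>z. z + of_real c) holomorphic_on {z. 0 \<le> Re z}" by (intro holomorphic_intros)
      then show ?thesis using holomorphic_on_compose_gen[OF _ holf sub] by (simp add: o_def)
    qed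
    have h2: "(\<lambda>z. (z + of_real c) powr complex_of_real (1 - \<epsilon>)) holomorphic_on {z. 0 \<le> Re z}"
    proof (intro holomorphic_intros)
      fix z :: complex assume "z \<in> {z. 0 \<le> Re z}"
      then have "Re (z + of_real c) > 0" by (simp add: c_def)
      then show "z + of_real c \<notin> \<real>\<^sub>\<le>\<^sub>0" by (auto simp: complex_nonpos_Reals_iff)
    qed
    show ?thesis unfolding h_def by (intro holomorphic_intros h1 h2)
  qed
  have bd: "norm (h z) \<le> M" if "0 \<le> Re z" for z
    unfolding h_def using M[of "z + of_real c"] that by (simp add: c_def)
  have dec: "\<exists>C T. \<forall>t\<ge>T. norm (h (of_real t)) \<le> C * exp (- a * t)" if apos: "a > 0" for a
  proof -
    obtain C where Cpos: "C > 0" and ev: "eventually (\<lambda>t. norm (f (complex_of_real t))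
        \<le> C * norm (complex_of_real (exp (- a * t)))) at_top"
      using assms(3)[OF apos] by (elim landau_o.bigE)
    then obtain T where T: "\<And>t. t \<ge> T \<Longrightarrow> norm (f (complex_of_real t)) \<le> C * exp (- a * t)"
      by (auto simp: eventually_at_top_linorder)
    have "norm (h (of_real t)) \<le> C * exp (- a * t)" if tT: "t \<ge> max T 0" for t
    proof -
      have tc: "t + c > 0" using tT cpos by simp
      have eq: "of_real t + of_real c = complex_of_real (t + c)" by simp
      have "norm (exp (- complex_of_real b * (of_real t + of_real c) powr complex_of_real (1 - \<epsilon>)))
            = exp (- b * (t + c) powr (1 - \<epsilon>))"
      proof -
        have p: "complex_of_real (t + c) powr complex_of_real (1 - \<epsilon>) = of_real ((t + c) powr (1 - \<epsilon>))"
          by (rule powr_of_real) (use tc in simp)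
        have q: "- complex_of_real b * of_real ((t + c) powr (1 - \<epsilon>)) = of_real (- b * (t + c) powr (1 - \<epsilon>))"
          by simp
        show ?thesis unfolding eq p q exp_of_real[symmetric] norm_of_real by simp
      qed
      also have "\<dots> \<le> 1" using bpos by simp
      finally have e1: "norm (exp (- complex_of_real b * (of_real t + of_real c) powr complex_of_real (1 - \<epsilon>))) \<le> 1" .
      have "norm (f (of_real t + of_real c)) \<le> C * exp (- a * (t + c))"
        unfolding eq using T[of "t + c"] tT cpos by simp
      also have "\<dots> \<le> C * exp (- a * t)" using Cpos apos cpos by (simp add: algebra_simps)
      finally have f1: "norm (f (of_real t + of_real c)) \<le> C * exp (- a * t)" .
      have "norm (h (of_real t)) \<le> norm (f (of_real t + of_real c)) * 1"
        unfolding h_def norm_mult using e1 by (intro mult_left_mono) auto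
      then show ?thesis using f1 by simp
    qed
    then show ?thesis by blast
  qed
  have zero: "f w = 0" if "Re w > c" for w
  proof -
    have "h (w - of_real c) = 0"
      by (rule core_vanish[OF hol bd dec]) (use that in auto)
    then show ?thesis by (simp add: h_def)
  qed
  obtain z1 where z1: "Re z1 > \<beta>" "f z1 \<noteq> 0" using assms(2) by blast
  have "f z1 = (\<lambda>_. 0) z1"
  proof (rule analytic_continuation_open[of "{z. Re z > c}" "{z. Re z > \<beta>}" f "\<lambda>_. 0"])
    show "{z. Re z > c} \<noteq> {}" by (auto intro!: exI[of _ "of_real (c + 1)"])
    show "{z. Re z > c} \<subseteq> {z. Re z > \<beta>}" by (auto simp: c_def)
  qed (use holf zero z1 in \<open>auto simp: open_halfspace_Re_gt\<close>)
  then show False using z1 by simp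
qed

end
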